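(* Let $M$ be a nonzero real symmetric matrix and let $\xi$ be a principal eigenvector of $M$. Then for any $\eta\ne0$ with $M\eta\neq 0$, $$\angle(\eta,M\eta)\le3\,\angle(\eta,\xi).$$
   Context: For nonzero $\xi,\eta\in\mathbb{R}^p$, $\angle(\xi,\eta)=\cos^{-1}\bigl(|\xi^T\eta|/(\|\xi\|_2\|\eta\|_2)\bigr)\in[0,\pi/2]$. A principal eigenvector of a symmetric matrix $M$ is an eigenvector associated with an eigenvalue of largest absolute value, so that $\|M\xi\|_2=\|M\|_2\|\xi\|_2$ where $\|M\|_2$ is the spectral (operator 2-) norm. *)

theory Defs
  imports "HOL-Analysis.Analysis"
begin

definition vangle :: "real ^ 'n \<Rightarrow> real ^ 'n \<Rightarrow> real" where
  "vangle x y = arccos (\<bar>x \<bullet> y\<bar> / (norm x * norm y))"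

definition principal_eigenvector :: "real ^ 'n ^ 'n \<Rightarrow> real ^ 'n \<Rightarrow> bool" where
  "principal_eigenvector M \<xi> \<longleftrightarrow> \<xi> \<noteq> 0 \<and>
     (\<exists>l. M *v \<xi> = l *\<^sub>R \<xi> \<and>
        (\<forall>m v. v \<noteq> 0 \<and> M *v v = m *\<^sub>R v \<longrightarrow> \<bar>m\<bar> \<le> \<bar>l\<bar>))"

end

theory Submission
  imports Defs
begin

lemma sym_inner:
  fixes M :: "real ^ 'n ^ 'n"
  assumes "transpose M = M"
  shows "inner (M *v x) y = inner x (M *v y)"
proof -
  have "M *v x = x v* M" by (metis vector_transpose_matrix assms)
  then show ?thesis by (simp add: dot_lmul_matrix)
qed

lemma sym_bound:
  fixes M :: "real ^ 'n ^ 'n"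
  assumes sym: "transpose M = M"
  shows "\<exists>s\<ge>0. (\<exists>v. v \<noteq> 0 \<and> (M *v v = s *\<^sub>R v \<or> M *v v = (-s) *\<^sub>R v)) \<and>
               (\<forall>x. norm (M *v x) \<le> s * norm x)"
proof -
  have ne: "sphere (0::real^'n) 1 \<noteq> {}" by simp
  have cont: "continuous_on (sphere (0::real^'n) 1) (\<lambda>x. norm (M *v x))"
    by (intro continuous_intros linear_continuous_on matrix_vector_mul_linear bounded_linear_intros)
  obtain v0 where v0: "v0 \<in> sphere 0 1" and mx: "\<And>y. y \<in> sphere 0 1 \<Longrightarrow> norm (M *v y) \<le> norm (M *v v0)"
    using continuous_attains_sup[OF compact_sphere ne cont] by blast
  define s where "s = norm (M *v v0)"
  have nv0: "norm v0 = 1" using v0 by simp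
  have bnd: "norm (M *v x) \<le> s * norm x" for x
  proof (cases "x = 0")
    case True then show ?thesis by simp
  next
    case False
    then have "(x /\<^sub>R norm x) \<in> sphere 0 1" by simp
    then have "norm (M *v (x /\<^sub>R norm x)) \<le> s" using mx s_def by blast
    then have "norm (M *v x) / norm x \<le> s"
      by (simp add: matrix_vector_mult_scaleR divide_inverse mult.commute)
    then show ?thesis using False by (simp add: divide_le_eq mult.commute)
  qed
  define \<mu> where "\<mu> = s^2"
  define g where "g v = \<mu> * inner v v - inner (M *v v) (M *v v)" for v
  have gnn: "g v \<ge> 0" for v
  proof -
    have "norm (M *v v) ^2 \<le> (s * norm v)^2"
      using bnd[of v] by (intro power_mono) auto
    then show ?thesis unfolding g_def \<mu>_def
      by (simp add: power_mult_distrib dot_square_norm)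
  qed
  have g0: "g v0 = 0" unfolding g_def \<mu>_def s_def using nv0
    by (simp add: dot_square_norm)
  have key: "inner (M *v (M *v v0)) u = \<mu> * inner v0 u" for u
  proof -
    define c where "c = \<mu> * inner v0 u - inner (M *v v0) (M *v u)"
    have exp: "g (v0 + t *\<^sub>R u) = g v0 + 2 * t * c + t^2 * g u" for t
      unfolding g_def c_def
      by (simp add: matrix_vector_right_distrib matrix_vector_mult_scaleR inner_add_left
          inner_add_right inner_commute algebra_simps power2_eq_square)
    have "c = 0"
    proof (rule ccontr)
      assume cn: "c \<noteq> 0"
      define K where "K = g u + 1"
      have K: "K > 0" using gnn[of u] K_def by simp
      define t where "t = - c / K"
      have "g (v0 + t *\<^sub>R u) = c^2 * (- g u - 2) / K^2"
      proof -
        have gu: "g u = K - 1" using K_def by simp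
        show ?thesis unfolding exp g0 t_def gu using K
          by (simp add: field_simps power2_eq_square)
      qed
      also have "\<dots> < 0" using cn K gnn[of u]
        by (intro divide_neg_pos mult_pos_neg) auto
      finally show False using gnn by (metis not_le)
    qed
    then show ?thesis unfolding c_def using sym_inner[OF sym, of "M *v v0" u] by simp
  qed
  have eig2: "M *v (M *v v0) = \<mu> *\<^sub>R v0"
  proof -
    let ?d = "M *v (M *v v0) - \<mu> *\<^sub>R v0"
    have "inner ?d ?d = 0" using key[of ?d] by (simp add: inner_diff_left)
    then show ?thesis by simp
  qed
  have s0: "s \<ge> 0" unfolding s_def by simp
  define w where "w = M *v v0 + s *\<^sub>R v0"
  have Mw: "M *v w = s *\<^sub>R w"
    unfolding w_def using eig2
    by (simp add: matrix_vector_right_distrib matrix_vector_mult_scaleR \<mu>_def power2_eq_square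
        algebra_simps)
  have ev: "\<exists>v. v \<noteq> 0 \<and> (M *v v = s *\<^sub>R v \<or> M *v v = (-s) *\<^sub>R v)"
  proof (cases "w = 0")
    case True
    then have "M *v v0 = (-s) *\<^sub>R v0" unfolding w_def by (simp add: eq_neg_iff_add_eq_0)
    moreover have "v0 \<noteq> 0" using nv0 by auto
    ultimately show ?thesis by blast
  next
    case False then show ?thesis using Mw by blast
  qed
  show ?thesis using s0 ev bnd by blast
qed

theorem lemma1:
  fixes M :: "real ^ 'n ^ 'n" and \<xi> \<eta> :: "real ^ 'n"
  assumes "transpose M = M"
    and "M \<noteq> 0"
    and "principal_eigenvector M \<xi>"
    and "\<eta> \<noteq> 0"
    and "M *v \<eta> \<noteq> 0"
  shows "vangle \<eta> (M *v \<eta>) \<le> 3 * vangle \<eta> \<xi>"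
proof -
  note sym = assms(1)
  obtain l where xi0: "\<xi> \<noteq> 0" and Mxi: "M *v \<xi> = l *\<^sub>R \<xi>"
    and mx: "\<And>m v. v \<noteq> 0 \<Longrightarrow> M *v v = m *\<^sub>R v \<Longrightarrow> \<bar>m\<bar> \<le> \<bar>l\<bar>"
    using assms(3) unfolding principal_eigenvector_def by blast
  obtain s where s0: "s \<ge> 0" and sv: "\<exists>v. v \<noteq> 0 \<and> (M *v v = s *\<^sub>R v \<or> M *v v = (-s) *\<^sub>R v)"
    and sb: "\<And>x. norm (M *v x) \<le> s * norm x"
    using sym_bound[OF sym] by blast
  have "s \<le> \<bar>l\<bar>" using sv mx s0 by fastforce
  then have bnd: "norm (M *v x) \<le> \<bar>l\<bar> * norm x" for x
    using sb[of x] by (meson mult_right_mono norm_ge_zero order_trans)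
  define e where "e = \<xi> /\<^sub>R norm \<xi>"
  have ne: "norm e = 1" using xi0 e_def by simp
  have ee: "inner e e = 1" using ne by (simp add: dot_square_norm)
  have Me: "M *v e = l *\<^sub>R e" unfolding e_def using Mxi by (simp add: matrix_vector_mult_scaleR)
  define a where "a = norm \<eta>"
  have a0: "a > 0" using assms(4) a_def by simp
  define d where "d = inner \<eta> e"
  define p where "p = d *\<^sub>R e"
  define q where "q = \<eta> - p"
  have eta: "\<eta> = p + q" unfolding q_def by simp
  have qe: "inner q e = 0" unfolding q_def p_def d_def using ee by (simp add: inner_diff_left)
  have pMq: "inner p (M *v q) = 0"
    using sym_inner[OF sym, of p q] unfolding p_def
    using qe by (simp add: matrix_vector_mult_scaleR Me inner_commute)
  have qp: "inner q p = 0" unfolding p_def using qe by simp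
  have pp: "inner p p = d^2" unfolding p_def using ee by (simp add: power2_eq_square)
  have qq: "inner q q = a^2 - d^2"
  proof -
    have "inner \<eta> \<eta> = inner p p + inner q q" unfolding eta
      using qp by (simp add: inner_add_left inner_add_right inner_commute)
    then show ?thesis using pp a_def by (simp add: dot_square_norm)
  qed
  have Mp: "M *v p = l *\<^sub>R p" unfolding p_def using Me by (simp add: matrix_vector_mult_scaleR)
  have dot: "inner \<eta> (M *v \<eta>) = l * d^2 + inner q (M *v q)"
  proof -
    have "inner \<eta> (M *v \<eta>) = inner (p + q) (l *\<^sub>R p + M *v q)"
      unfolding eta by (simp add: matrix_vector_right_distrib Mp)
    also have "\<dots> = l * inner p p + inner p (M *v q) + l * inner q p + inner q (M *v q)"
      by (simp add: inner_add_left inner_add_right distrib_left)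
    finally show ?thesis using pMq qp pp by simp
  qed
  have qMq: "\<bar>inner q (M *v q)\<bar> \<le> \<bar>l\<bar> * (a^2 - d^2)"
  proof -
    have "\<bar>inner q (M *v q)\<bar> \<le> norm q * norm (M *v q)" by (rule Cauchy_Schwarz_ineq2)
    also have "\<dots> \<le> norm q * (\<bar>l\<bar> * norm q)" by (intro mult_left_mono bnd) auto
    also have "\<dots> = \<bar>l\<bar> * inner q q" by (simp add: dot_square_norm power2_eq_square)
    finally show ?thesis using qq by simp
  qed
  have lower: "\<bar>inner \<eta> (M *v \<eta>)\<bar> \<ge> \<bar>l\<bar> * (2 * d^2 - a^2)"
  proof -
    have "\<bar>l * d^2 + inner q (M *v q)\<bar> \<ge> \<bar>l\<bar> * d^2 - \<bar>inner q (M *v q)\<bar>"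
      by (simp add: abs_mult)
    then show ?thesis using dot qMq by (simp add: algebra_simps)
  qed
  have nM: "norm (M *v \<eta>) \<le> \<bar>l\<bar> * a" using bnd a_def by simp
  have nMpos: "norm (M *v \<eta>) > 0" using assms(5) by simp
  have lpos: "\<bar>l\<bar> > 0" using nM nMpos a0 by (metis abs_ge_zero less_eq_real_def mult_eq_0_iff not_less)
  define c where "c = \<bar>d\<bar> / a"
  have ang2: "vangle \<eta> \<xi> = arccos c"
  proof -
    have "\<xi> = norm \<xi> *\<^sub>R e" unfolding e_def using xi0 by simp
    then have "inner \<eta> \<xi> = norm \<xi> * d" unfolding d_def by (metis inner_scaleR_right)
    then show ?thesis unfolding vangle_def c_def a_def using xi0
      by (simp add: abs_mult)
  qed
  have dle: "d^2 \<le> a^2" using qq by (metis diff_ge_0_iff_ge inner_ge_zero)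
  have dla: "\<bar>d\<bar> \<le> a" using dle a0 by (metis abs_of_pos power2_le_imp_le power2_abs abs_ge_zero)
  have c01: "0 \<le> c" "c \<le> 1"
    using a0 dla unfolding c_def by (auto simp: divide_le_eq)
  define r where "r = \<bar>inner \<eta> (M *v \<eta>)\<bar> / (norm \<eta> * norm (M *v \<eta>))"
  have r1: "r \<le> 1" unfolding r_def using a0 nMpos a_def
    by (simp add: divide_le_eq Cauchy_Schwarz_ineq2)
  have rlow: "2 * c^2 - 1 \<le> r"
  proof (cases "2 * d^2 - a^2 \<le> 0")
    case True
    have "2 * c^2 - 1 = (2 * d^2 - a^2) / a^2" unfolding c_def using a0
      by (simp add: field_simps power2_abs)
    also have "\<dots> \<le> 0" using True a0 by (simp add: divide_nonpos_pos)
    also have "0 \<le> r" unfolding r_def by simp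
    finally show ?thesis .
  next
    case False
    have "2 * c^2 - 1 = (\<bar>l\<bar> * (2 * d^2 - a^2)) / (a * (\<bar>l\<bar> * a))" unfolding c_def using a0 lpos
      by (simp add: field_simps power2_abs power2_eq_square)
    also have "\<dots> \<le> \<bar>inner \<eta> (M *v \<eta>)\<bar> / (a * norm (M *v \<eta>))"
      using False lower nM nMpos a0 lpos
      by (intro frac_le mult_left_mono mult_pos_pos) auto
    finally show ?thesis unfolding r_def a_def .
  qed
  define th where "th = arccos c"
  have th: "0 \<le> th" "th \<le> pi/2" unfolding th_def using c01 arccos_lbound[of c] arccos_le_pi2[of c]
    by auto
  have "cos (2 * th) = 2 * c^2 - 1" unfolding th_def using c01
    by (simp add: cos_double_cos cos_arccos)
  have "vangle \<eta> (M *v \<eta>) = arccos r" unfolding vangle_def r_def ..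
  also have "\<dots> \<le> arccos (cos (2 * th))"
    using \<open>cos (2 * th) = _\<close> rlow r1 c01
    by (intro arccos_le_arccos) (auto simp: power_le_one)
  also have "\<dots> = 2 * th" using th by (intro arccos_cos) auto
  also have "\<dots> \<le> 3 * vangle \<eta> \<xi>" using th ang2 th_def by simp
  finally show ?thesis .
qed

end
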